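(* Consider the damped wave equation $u_{tt}=u_{xx}-\gamma(x)u_t+g(x,t)$ on $a\le x\le b$ with Dirichlet boundary data $u(a,t)=u_a(t)$, $u(b,t)=u_b(t)$ and initial data $u(x,0)=\phi(x)$, $u_t(x,0)=\psi(x)$, where $\gamma\ge 0$. Let $h=(b-a)/N$, $k>0$ the time step, and let $\mathcal{M}$ be the $(2N-2)\times(2N-2)$ block matrix $$\mathcal{M}=\begin{pmatrix}0 & I\\ \frac{1}{h^2}A & -\Gamma\end{pmatrix},$$ where $I$ is the $(N-1)\times(N-1)$ identity, $A$ is the $(N-1)\times(N-1)$ tridiagonal matrix with $-2$ on the diagonal and $1$ on the off-diagonals, and $\Gamma=\mathrm{diag}(\gamma(x_1),\dots,\gamma(x_{N-1}))$ with $x_i=a+ih$. Then the implicit scheme FD-(1,1), $$\big(I-\tfrac12\mathcal{M}k\big)V^{n+1}=\big(I+\tfrac12\mathcal{M}k\big)V^n+\tfrac{k}{2}\big(I+\tfrac12\mathcal{M}k\big)F(t_n)+\tfrac{k}{2}\big(I-\tfrac12\mathcal{M}k\big)F(t_n+k),$$ is unconditionally stable, i.e. stable for all $h>0$ and $k>0$.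
   Context: The scheme arises by writing $U=(u,u_t)^T$, discretizing $u_{xx}$ by central differences at interior nodes $x_1,\dots,x_{N-1}$, giving $V'(t)=\mathcal{M}V(t)+F(t)$ with $V(t)=(u(x_1,t),\dots,u(x_{N-1},t),u_t(x_1,t),\dots,u_t(x_{N-1},t))^T$ and $F(t)=(0,\,G(t)+\frac{1}{h^2}B(t))^T$, $G(t)=(g(x_1,t),\dots,g(x_{N-1},t))^T$, $B(t)=(u_a(t),0,\dots,0,u_b(t))^T$; $V^n$ approximates $V(t_n)$, $t_n=nk$. A scheme is called stable if all eigenvalues of its amplification matrix (here $(I-\frac12 k\mathcal{M})^{-1}(I+\frac12 k\mathcal{M})$) lie in the closed unit disk. *)

theory Defs
  imports Complex_Main "Jordan_Normal_Form.Gauss_Jordan_Elimination" "Jordan_Normal_Form.Char_Poly"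
begin

text \<open>Tridiagonal (N-1)x(N-1) matrix A: -2 on the diagonal, 1 on the off-diagonals
  (entries indexed from 0; row i corresponds to the node x_(i+1)).\<close>
definition tridiagA :: "nat \<Rightarrow> nat \<Rightarrow> nat \<Rightarrow> real" where
  "tridiagA N i j = (if i = j then -2 else if i = j + 1 \<or> j = i + 1 then 1 else 0)"

text \<open>The (2N-2)x(2N-2) block matrix M = [[0, I], [A/h^2, -Gamma]],
  Gamma = diag(gamma(x_1),...,gamma(x_(N-1))), x_i = a + i h, viewed as a complex matrix.\<close>
definition blockM :: "nat \<Rightarrow> real \<Rightarrow> real \<Rightarrow> (real \<Rightarrow> real) \<Rightarrow> complex mat" where
  "blockM N a h \<gamma> = mat (2*(N-1)) (2*(N-1)) (\<lambda>(i,j).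
     if i < N - 1 then (if j = i + (N - 1) then 1 else 0)
     else if j < N - 1 then complex_of_real (tridiagA N (i - (N - 1)) j / h^2)
     else if j - (N - 1) = i - (N - 1) then - complex_of_real (\<gamma> (a + real (i - (N - 1) + 1) * h))
     else 0)"

definition schemeL :: "nat \<Rightarrow> real \<Rightarrow> real \<Rightarrow> real \<Rightarrow> (real \<Rightarrow> real) \<Rightarrow> complex mat" where
  "schemeL N a h k \<gamma> = 1\<^sub>m (2*(N-1)) - complex_of_real (k/2) \<cdot>\<^sub>m blockM N a h \<gamma>"

definition schemeR :: "nat \<Rightarrow> real \<Rightarrow> real \<Rightarrow> real \<Rightarrow> (real \<Rightarrow> real) \<Rightarrow> complex mat" where
  "schemeR N a h k \<gamma> = 1\<^sub>m (2*(N-1)) + complex_of_real (k/2) \<cdot>\<^sub>m blockM N a h \<gamma>"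

definition amplification :: "nat \<Rightarrow> real \<Rightarrow> real \<Rightarrow> real \<Rightarrow> (real \<Rightarrow> real) \<Rightarrow> complex mat" where
  "amplification N a h k \<gamma> = the (mat_inverse (schemeL N a h k \<gamma>)) * schemeR N a h k \<gamma>"

definition scheme_stable :: "nat \<Rightarrow> real \<Rightarrow> real \<Rightarrow> real \<Rightarrow> (real \<Rightarrow> real) \<Rightarrow> bool" where
  "scheme_stable N a h k \<gamma> \<longleftrightarrow> invertible_mat (schemeL N a h k \<gamma>) \<and>
     (\<forall>ev. eigenvalue (amplification N a h k \<gamma>) ev \<longrightarrow> cmod ev \<le> 1)"

end

theory Submission
  imports Defs
begin

lemma sum_split_add: "(\<Sum>j<n+(m::nat). g j) = (\<Sum>j<n. g j) + (\<Sum>j<m. g (n+j))"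
  by (induction m) (auto simp: add.assoc)

lemma parts:
  fixes f :: "nat \<Rightarrow> complex"
  assumes "f 0 = 0"
  shows "(\<Sum>i<n. cnj (f (i+1)) * (f i - 2 * f (i+1) + f (i+2)))
     = - (\<Sum>i<n. cnj (f (i+1) - f i) * (f (i+1) - f i)) + cnj (f n) * (f (n+1) - f n)"
proof (induction n)
  case 0 then show ?case using assms by simp
next
  case (Suc n)
  show ?case unfolding sum.lessThan_Suc Suc
    by (simp add: algebra_simps)
qed

lemma trisum:
  fixes x :: "nat \<Rightarrow> complex"
  assumes "i < n" "n = N - 1"
  defines "f \<equiv> (\<lambda>j. if 1 \<le> j \<and> j \<le> n then x (j - 1) else 0)"
  shows "(\<Sum>j<n. complex_of_real (tridiagA N i j) * x j) = f i - 2 * f (i+1) + f (i+2)"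
proof -
  have e: "complex_of_real (tridiagA N i j) * x j =
      (if j = i then -2 * x j else 0) + (if j + 1 = i then x j else 0) + (if j = i + 1 then x j else 0)" for j
    unfolding tridiagA_def by auto
  have s2: "(\<Sum>j<n. if j + 1 = i then x j else 0) = (if 0 < i then x (i - 1) else 0)"
  proof (cases "0 < i")
    case True
    have "(\<Sum>j<n. if j + 1 = i then x j else 0) = (\<Sum>j<n. if j = i - 1 then x j else 0)"
      by (rule sum.cong) (use True in auto)
    also have "\<dots> = x (i - 1)" using True assms(1) by simp
    finally show ?thesis using True by simp
  qed auto
  show ?thesis
    unfolding e sum.distrib s2 using assms(1) by (auto simp: f_def)
qed

lemma quad_re:
  fixes \<mu> :: complex and P G X :: real
  assumes "complex_of_real P + \<mu> * complex_of_real G + \<mu> * \<mu> * complex_of_real X = 0"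
    and "P \<ge> 0" "G \<ge> 0" "X > 0"
  shows "Re \<mu> \<le> 0"
proof (rule ccontr)
  assume a: "\<not> Re \<mu> \<le> 0"
  from arg_cong[OF assms(1), of Re] have r: "P + Re \<mu> * G + (Re \<mu> * Re \<mu> - Im \<mu> * Im \<mu>) * X = 0"
    by simp
  from arg_cong[OF assms(1), of Im] have i: "Im \<mu> * G + 2 * Re \<mu> * Im \<mu> * X = 0"
    by (simp add: algebra_simps)
  have "Im \<mu> * (G + 2 * Re \<mu> * X) = 0" using i by (simp add: algebra_simps)
  moreover have "G + 2 * Re \<mu> * X > 0" using a assms by (simp add: add_nonneg_pos)
  ultimately have "Im \<mu> = 0" by simp
  with r have "P + Re \<mu> * G + Re \<mu> * Re \<mu> * X = 0" by simp
  moreover have "Re \<mu> * G \<ge> 0" "Re \<mu> * Re \<mu> * X > 0" using a assms by auto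
  ultimately show False using assms(2) by linarith
qed

lemma core:
  fixes N :: nat and a h :: real and \<gamma> :: "real \<Rightarrow> real" and \<mu> :: complex and v :: "complex vec"
  assumes N: "N \<ge> 2" and h: "h > 0" and g: "\<forall>i<N-1. \<gamma> (a + real (i+1) * h) \<ge> 0"
    and v: "v \<in> carrier_vec (2*(N-1))" and nz: "v \<noteq> 0\<^sub>v (2*(N-1))"
    and ev: "blockM N a h \<gamma> *\<^sub>v v = \<mu> \<cdot>\<^sub>v v"
  shows "Re \<mu> \<le> 0"
proof -
  define n where "n = N - 1"
  have n: "n \<ge> 1" "N - 1 = n" "2*(N-1) = n+n" using N by (auto simp: n_def)
  define M where "M = blockM N a h \<gamma>"
  have Mc: "M \<in> carrier_mat (n+n) (n+n)" unfolding M_def blockM_def n by auto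
  have Mij: "M $$ (i,j) = (if i < n then (if j = i + n then 1 else 0)
     else if j < n then complex_of_real (tridiagA N (i - n) j / h^2)
     else if j - n = i - n then - complex_of_real (\<gamma> (a + real (i - n + 1) * h))
     else 0)" if "i < n+n" "j < n+n" for i j
    using that unfolding M_def blockM_def n by simp
  have vc: "dim_vec v = n + n" using v n by auto
  have comp: "(\<Sum>j<n+n. M $$ (i,j) * v$j) = \<mu> * v$i" if i: "i < n+n" for i
  proof -
    have "(M *\<^sub>v v) $ i = (\<mu> \<cdot>\<^sub>v v) $ i" using ev M_def by simp
    then show ?thesis using i Mc vc
      by (simp add: scalar_prod_def lessThan_atLeast0)
  qed
  define x where "x j = v $ j" for j
  define gg where "gg i = \<gamma> (a + real (i+1) * h)" for i
  have y: "v $ (n+i) = \<mu> * x i" if i: "i < n" for i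
  proof -
    have "\<mu> * v $ i = (\<Sum>j<n+n. M $$ (i,j) * v$j)" using comp[of i] i by simp
    also have "\<dots> = (\<Sum>j<n. M $$ (i,j) * v$j) + (\<Sum>j<n. M $$ (i,n+j) * v$(n+j))"
      by (rule sum_split_add)
    also have "(\<Sum>j<n. M $$ (i,j) * v$j) = 0"
      by (rule sum.neutral) (use i in \<open>auto simp: Mij\<close>)
    also have "(\<Sum>j<n. M $$ (i,n+j) * v$(n+j)) = (\<Sum>j<n. if j = i then v$(n+j) else 0)"
      by (rule sum.cong) (use i in \<open>auto simp: Mij\<close>)
    also have "\<dots> = v $ (n+i)" using i by simp
    finally show ?thesis by (simp add: x_def)
  qed
  have eq2: "(\<Sum>j<n. complex_of_real (tridiagA N i j) * x j) / complex_of_real (h^2)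
      - complex_of_real (gg i) * (\<mu> * x i) = \<mu> * (\<mu> * x i)" if i: "i < n" for i
  proof -
    have "\<mu> * v $ (n+i) = (\<Sum>j<n+n. M $$ (n+i,j) * v$j)" using comp[of "n+i"] i by simp
    also have "\<dots> = (\<Sum>j<n. M $$ (n+i,j) * v$j) + (\<Sum>j<n. M $$ (n+i,n+j) * v$(n+j))"
      by (rule sum_split_add)
    also have "(\<Sum>j<n. M $$ (n+i,j) * v$j) = (\<Sum>j<n. complex_of_real (tridiagA N i j) * x j) / complex_of_real (h^2)"
      unfolding sum_divide_distrib
      by (rule sum.cong) (use i in \<open>auto simp: Mij x_def\<close>)
    also have "(\<Sum>j<n. M $$ (n+i,n+j) * v$(n+j)) = (\<Sum>j<n. if j = i then - complex_of_real (gg i) * v$(n+j) else 0)"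
      by (rule sum.cong) (use i in \<open>auto simp: Mij gg_def add.commute\<close>)
    also have "\<dots> = - complex_of_real (gg i) * v $ (n+i)" using i by simp
    finally show ?thesis using y[OF i] by simp
  qed
  define f where "f j = (if 1 \<le> j \<and> j \<le> n then x (j - 1) else 0)" for j
  have fx: "f (i+1) = x i" if "i < n" for i using that by (simp add: f_def)
  have f0: "f 0 = 0" "f (n+1) = 0" by (auto simp: f_def)
  have tri: "(\<Sum>j<n. complex_of_real (tridiagA N i j) * x j) = f i - 2 * f (i+1) + f (i+2)"
    if "i < n" for i
    using trisum[OF that n(2)[symmetric], of x] by (simp add: f_def)
  define X where "X = (\<Sum>i<n. cmod (x i) ^ 2)"
  define G where "G = (\<Sum>i<n. gg i * cmod (x i) ^ 2)"
  define P where "P = (\<Sum>i<n. cmod (f (i+1) - f i) ^ 2) + cmod (f n) ^ 2"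
  have cs: "cnj z * z = complex_of_real (cmod z ^ 2)" for z
    by (simp add: complex_norm_square mult.commute del: of_real_power)
  have S: "(\<Sum>i<n. cnj (x i) * (\<Sum>j<n. complex_of_real (tridiagA N i j) * x j)) = - complex_of_real P"
  proof -
    have "(\<Sum>i<n. cnj (x i) * (\<Sum>j<n. complex_of_real (tridiagA N i j) * x j))
        = (\<Sum>i<n. cnj (f (i+1)) * (f i - 2 * f (i+1) + f (i+2)))"
      by (rule sum.cong[OF refl]) (metis lessThan_iff tri fx)
    also have "\<dots> = - (\<Sum>i<n. cnj (f (i+1) - f i) * (f (i+1) - f i)) + cnj (f n) * (f (n+1) - f n)"
      by (rule parts[of f, OF f0(1)])
    also have "\<dots> = - complex_of_real P"
      unfolding P_def f0(2) of_real_add of_real_sum cs[symmetric] by simp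
    finally show ?thesis .
  qed
  have sumeq: "(\<Sum>i<n. cnj (x i) * ((\<Sum>j<n. complex_of_real (tridiagA N i j) * x j) / complex_of_real (h^2)
      - complex_of_real (gg i) * (\<mu> * x i))) = (\<Sum>i<n. cnj (x i) * (\<mu> * (\<mu> * x i)))"
    by (rule sum.cong[OF refl]) (metis lessThan_iff eq2)
  have L: "(\<Sum>i<n. cnj (x i) * ((\<Sum>j<n. complex_of_real (tridiagA N i j) * x j) / complex_of_real (h^2)
      - complex_of_real (gg i) * (\<mu> * x i))) =
      (\<Sum>i<n. cnj (x i) * (\<Sum>j<n. complex_of_real (tridiagA N i j) * x j)) / complex_of_real (h^2)
      - \<mu> * (\<Sum>i<n. complex_of_real (gg i) * (cnj (x i) * x i))"
    by (simp add: sum_subtractf sum_divide_distrib sum_distrib_left algebra_simps)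
  have R: "(\<Sum>i<n. cnj (x i) * (\<mu> * (\<mu> * x i))) = \<mu> * \<mu> * (\<Sum>i<n. cnj (x i) * x i)"
    by (simp add: sum_distrib_left algebra_simps)
  have GG: "(\<Sum>i<n. complex_of_real (gg i) * (cnj (x i) * x i)) = complex_of_real G"
    unfolding G_def cs by simp
  have XX: "(\<Sum>i<n. cnj (x i) * x i) = complex_of_real X"
    unfolding X_def cs by simp
  have main: "- complex_of_real P / complex_of_real (h^2) - \<mu> * complex_of_real G = \<mu> * \<mu> * complex_of_real X"
    using sumeq unfolding L R GG XX S .
  have main2: "complex_of_real (P / h^2) + \<mu> * complex_of_real G + \<mu> * \<mu> * complex_of_real X = 0"
    using main h by (simp add: field_simps) (metis neg_eq_iff_add_eq_0)
  have Pn: "P / h^2 \<ge> 0" unfolding P_def by (intro divide_nonneg_nonneg add_nonneg_nonneg sum_nonneg) auto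
  have Gn: "G \<ge> 0" unfolding G_def using g n(2) by (intro sum_nonneg mult_nonneg_nonneg) (auto simp: gg_def)
  have "\<exists>i<n. x i \<noteq> 0"
  proof (rule ccontr)
    assume "\<not> ?thesis"
    then have z: "\<And>i. i < n \<Longrightarrow> x i = 0" by auto
    have "v = 0\<^sub>v (n+n)"
    proof (rule eq_vecI)
      fix i assume "i < dim_vec (0\<^sub>v (n+n) :: complex vec)"
      then have i: "i < n+n" by simp
      show "v $ i = 0\<^sub>v (n+n) $ i"
      proof (cases "i < n")
        case True then show ?thesis using z[OF True] i by (simp add: x_def)
      next
        case False
        then obtain j where j: "i = n + j" "j < n" using i by (metis add_diff_inverse_nat add_less_cancel_left)
        show ?thesis using y[OF j(2)] z[OF j(2)] j i by simp
      qed
    qed (use vc in simp)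
    then show False using nz n(3) by metis
  qed
  then obtain i0 where i0: "i0 < n" "x i0 \<noteq> 0" by auto
  have "X > 0" unfolding X_def
    by (rule sum_pos2[of _ i0]) (use i0 in auto)
  from quad_re[OF main2 Pn Gn this] show ?thesis .
qed
lemma lam_bound:
  fixes l \<mu> :: complex and c :: real
  assumes "c > 0" "Re \<mu> \<le> 0" "l - 1 = \<mu> * complex_of_real c * (1 + l)"
  shows "cmod l \<le> 1"
proof -
  from arg_cong[OF assms(3), of Re] have r: "Re l - 1 = c * (Re \<mu> * (1 + Re l) - Im \<mu> * Im l)"
    by (simp add: algebra_simps)
  from arg_cong[OF assms(3), of Im] have i: "Im l = c * (Re \<mu> * Im l + Im \<mu> * (1 + Re l))"
    by (simp add: algebra_simps)
  have "(Re l - 1) * (1 + Re l) + Im l * Im l = c * Re \<mu> * ((1 + Re l)^2 + (Im l)^2)"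
    unfolding r by (subst (2) i) (simp add: algebra_simps power2_eq_square)
  moreover have "c * Re \<mu> \<le> 0" using mult_nonneg_nonpos[of c "Re \<mu>"] assms by simp
  then have "c * Re \<mu> * ((1 + Re l)^2 + (Im l)^2) \<le> 0"
    by (rule mult_nonpos_nonneg) auto
  ultimately have "(Re l)^2 + (Im l)^2 \<le> 1" by (simp add: algebra_simps power2_eq_square)
  then have "cmod l ^ 2 \<le> 1" by (simp add: cmod_power2)
  then show ?thesis by (simp add: power_le_one_iff abs_square_le_1)
qed

lemma smult_mat_vec: "dim_vec v = dim_col A \<Longrightarrow> (c \<cdot>\<^sub>m (A :: complex mat)) *\<^sub>v v = c \<cdot>\<^sub>v (A *\<^sub>v v)"
  by (intro eq_vecI) (auto simp: scalar_prod_def sum_distrib_left mult.assoc)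

theorem proposition2:
  fixes N :: nat and a b k :: real and \<gamma> :: "real \<Rightarrow> real"
  assumes "N \<ge> 2" and "a < b" and "k > 0"
    and "\<forall>x\<in>{a..b}. \<gamma> x \<ge> 0"
  shows "scheme_stable N a ((b - a) / real N) k \<gamma>"
proof -
  define h where "h = (b - a) / real N"
  define n2 where "n2 = 2 * (N - 1)"
  have h: "h > 0" using assms unfolding h_def by auto
  have g: "\<forall>i<N-1. \<gamma> (a + real (i+1) * h) \<ge> 0"
  proof (intro allI impI)
    fix i assume i: "i < N - 1"
    have "real (i+1) * h \<le> real N * h" using i h by (intro mult_right_mono) auto
    also have "real N * h = b - a" using assms unfolding h_def by auto
    finally have "a + real (i+1) * h \<in> {a..b}" using h by auto
    then show "\<gamma> (a + real (i+1) * h) \<ge> 0" using assms(4) by blast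
  qed
  define M where "M = blockM N a h \<gamma>"
  define c where "c = complex_of_real (k/2)"
  have c0: "c \<noteq> 0" using assms(3) by (simp add: c_def)
  have Mc: "M \<in> carrier_mat n2 n2" unfolding M_def blockM_def n2_def by auto
  define L where "L = schemeL N a h k \<gamma>"
  define R where "R = schemeR N a h k \<gamma>"
  have Lc: "L \<in> carrier_mat n2 n2" unfolding L_def schemeL_def M_def[symmetric] c_def[symmetric] n2_def[symmetric]
    using Mc by auto
  have Rc: "R \<in> carrier_mat n2 n2" unfolding R_def schemeR_def M_def[symmetric] c_def[symmetric] n2_def[symmetric]
    using Mc by auto
  have Lv: "L *\<^sub>v v = v - c \<cdot>\<^sub>v (M *\<^sub>v v)" if v: "v \<in> carrier_vec n2" for v
    unfolding L_def schemeL_def M_def[symmetric] c_def[symmetric] n2_def[symmetric]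
    using Mc v by (subst minus_mult_distrib_mat_vec[of _ n2 n2]) (auto simp: smult_mat_vec)
  have Rv: "R *\<^sub>v v = v + c \<cdot>\<^sub>v (M *\<^sub>v v)" if v: "v \<in> carrier_vec n2" for v
    unfolding R_def schemeR_def M_def[symmetric] c_def[symmetric] n2_def[symmetric]
    using Mc v by (subst add_mult_distrib_mat_vec[of _ n2 n2]) (auto simp: smult_mat_vec)
  have core': "Re \<mu> \<le> 0" if "v \<in> carrier_vec n2" "v \<noteq> 0\<^sub>v n2" "M *\<^sub>v v = \<mu> \<cdot>\<^sub>v v" for v \<mu>
    using core[OF assms(1) h g, of v \<mu>] that unfolding M_def n2_def by simp
  have detL: "det L \<noteq> 0"
  proof
    assume "det L = 0"
    then obtain v where v: "v \<in> carrier_vec n2" "v \<noteq> 0\<^sub>v n2" "L *\<^sub>v v = 0\<^sub>v n2"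
      using det_0_iff_vec_prod_zero[OF Lc] by auto
    have "M *\<^sub>v v = complex_of_real (2/k) \<cdot>\<^sub>v v"
    proof (rule eq_vecI)
      fix i assume "i < dim_vec (complex_of_real (2/k) \<cdot>\<^sub>v v)"
      then have i: "i < n2" using v by simp
      have "(L *\<^sub>v v) $ i = 0" using v i by simp
      then have "v $ i - c * (M *\<^sub>v v) $ i = 0" using Lv[OF v(1)] i Mc v by simp
      then show "(M *\<^sub>v v) $ i = (complex_of_real (2/k) \<cdot>\<^sub>v v) $ i"
        using i v c0 by (simp add: c_def field_simps)
    qed (use Mc v in simp)
    from core'[OF v(1,2) this] assms(3) show False by simp
  qed
  obtain B where B: "mat_inverse L = Some B"
  proof (cases "mat_inverse L")
    case None
    from mat_inverse(1)[OF Lc None, of "()"] det_non_zero_imp_unit[OF Lc detL, of "()"]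
    show ?thesis by simp
  qed auto
  note BB = mat_inverse(2)[OF Lc B]
  have inv: "invertible_mat L"
    unfolding invertible_mat_def inverts_mat_def using Lc BB by auto
  have ev: "cmod l \<le> 1" if e: "eigenvalue (amplification N a h k \<gamma>) l" for l
  proof -
    have G: "amplification N a h k \<gamma> = B * R"
      unfolding amplification_def L_def[symmetric] R_def[symmetric] B by simp
    obtain v where v: "v \<in> carrier_vec n2" "v \<noteq> 0\<^sub>v n2" "(B * R) *\<^sub>v v = l \<cdot>\<^sub>v v"
      using e BB Rc unfolding eigenvalue_def eigenvector_def G by auto
    have "R *\<^sub>v v = L *\<^sub>v ((B * R) *\<^sub>v v)"
    proof -
      have "L *\<^sub>v ((B * R) *\<^sub>v v) = L *\<^sub>v (B *\<^sub>v (R *\<^sub>v v))" using BB Rc v(1) by (subst assoc_mult_mat_vec[of B n2 n2 R n2 v]) auto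
      also have "\<dots> = (L * B) *\<^sub>v (R *\<^sub>v v)"
        by (rule assoc_mult_mat_vec[symmetric]) (use BB Lc Rc v(1) in auto)
      also have "\<dots> = R *\<^sub>v v" using BB Rc v(1) by simp
      finally show ?thesis by simp
    qed
    also have "\<dots> = l \<cdot>\<^sub>v (L *\<^sub>v v)" using v Lc mult_mat_vec by simp
    finally have RL: "R *\<^sub>v v = l \<cdot>\<^sub>v (L *\<^sub>v v)" .
    define w where "w = M *\<^sub>v v"
    have comp: "v $ i + c * w $ i = l * (v $ i - c * w $ i)" if i: "i < n2" for i
    proof -
      have "(R *\<^sub>v v) $ i = (l \<cdot>\<^sub>v (L *\<^sub>v v)) $ i" using RL by simp
      then show ?thesis using Rv[OF v(1)] Lv[OF v(1)] i Mc v Lc by (simp add: w_def)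
    qed
    have l1: "1 + l \<noteq> 0"
    proof
      assume l: "1 + l = 0"
      have "v = 0\<^sub>v n2"
      proof (rule eq_vecI)
        fix i assume "i < dim_vec (0\<^sub>v n2 :: complex vec)"
        then have i: "i < n2" by simp
        have "l = -1" using l by (simp add: add_eq_0_iff)
        then show "v $ i = 0\<^sub>v n2 $ i" using comp[OF i] i by simp
      qed (use v in simp)
      then show False using v by simp
    qed
    define \<mu> where "\<mu> = (l - 1) / (c * (1 + l))"
    have "M *\<^sub>v v = \<mu> \<cdot>\<^sub>v v"
    proof (rule eq_vecI)
      fix i assume "i < dim_vec (\<mu> \<cdot>\<^sub>v v)"
      then have i: "i < n2" using v by simp
      have e1: "c * (1 + l) * w $ i = (l - 1) * v $ i" using comp[OF i] by (simp add: algebra_simps)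
      have nz: "c * (1 + l) \<noteq> 0" using c0 l1 by simp
      have "w $ i = (l - 1) * v $ i / (c * (1 + l))"
        using e1 nz by (simp add: eq_divide_eq mult.commute)
      then show "(M *\<^sub>v v) $ i = (\<mu> \<cdot>\<^sub>v v) $ i"
        using i v by (simp add: w_def[symmetric] \<mu>_def)
    qed (use Mc v in simp)
    from core'[OF v(1,2) this] have re: "Re \<mu> \<le> 0" .
    have nz: "c * (1 + l) \<noteq> 0" using c0 l1 by simp
    have "\<mu> * c * (1 + l) = (l - 1) / (c * (1 + l)) * (c * (1 + l))"
      by (simp add: \<mu>_def mult.assoc)
    also have "\<dots> = l - 1" using nz by simp
    finally have "l - 1 = \<mu> * complex_of_real (k/2) * (1 + l)"
      unfolding c_def by simp
    from lam_bound[OF _ re this] assms(3) show ?thesis by simp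
  qed
  show ?thesis
    unfolding scheme_stable_def h_def[symmetric] L_def[symmetric] using inv ev by blast
qed
end
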